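(* Let $m, n$ be positive integers with $m \mid n$, let $N < 2^n$ be a positive integer, and let $x < 2^m$ be an odd positive integer. Let $x_{\mathrm{minv}}$ be the inverse of $x$ modulo $2^m$. Define $z_0 = 0$ and, for $j = 0, 1, \ldots, \frac{n-2m}{m}$: $N_j = \lfloor N/2^{jm}\rfloor \bmod 2^m$; $\mathsf{ctrl}_j = \big[x_{\mathrm{minv}}\,(N_j - z_j)\big] \bmod 2^m \in [0, 2^m-1]$; $z'_j = z_j + \mathsf{ctrl}_j \cdot x$; and $z_{j+1} = \lfloor z'_j / 2^m\rfloor$. Then $0 \le z_j < x$ for all $j = 0, 1, \ldots, \frac{n-m}{m}$; $0 \le z'_j < 2^{2m}$ for all $j = 0, 1, \ldots, \frac{n-2m}{m}$; and $\mathsf{ctrl}_j = \lfloor z'_j / x\rfloor$ for all $j = 0, 1, \ldots, \frac{n-2m}{m}$. *)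

theory Defs
  imports "HOL-Number_Theory.Cong"
begin

definition Ndig :: "nat \<Rightarrow> int \<Rightarrow> nat \<Rightarrow> int" where
  "Ndig m N j = (N div 2 ^ (j * m)) mod 2 ^ m"

fun zseq :: "nat \<Rightarrow> int \<Rightarrow> int \<Rightarrow> int \<Rightarrow> nat \<Rightarrow> int" where
  "zseq m N x xminv 0 = 0"
| "zseq m N x xminv (Suc j) =
     (let z = zseq m N x xminv j;
          c = (xminv * (Ndig m N j - z)) mod 2 ^ m
      in (z + c * x) div 2 ^ m)"

definition ctrl :: "nat \<Rightarrow> int \<Rightarrow> int \<Rightarrow> int \<Rightarrow> nat \<Rightarrow> int" where
  "ctrl m N x xminv j = (xminv * (Ndig m N j - zseq m N x xminv j)) mod 2 ^ m"

definition zprime :: "nat \<Rightarrow> int \<Rightarrow> int \<Rightarrow> int \<Rightarrow> nat \<Rightarrow> int" where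
  "zprime m N x xminv j = zseq m N x xminv j + ctrl m N x xminv j * x"

end

theory Submission
  imports Defs
begin

lemma ctrl_bounds: "0 \<le> ctrl m N x xminv j \<and> ctrl m N x xminv j < 2 ^ m"
  unfolding ctrl_def by simp

lemma z_bounds:
  assumes "0 < (x::int)"
  shows "0 \<le> zseq m N x xminv j \<and> zseq m N x xminv j < x"
proof (induction j)
  case 0
  then show ?case using assms by simp
next
  case (Suc j)
  define z where "z = zseq m N x xminv j"
  define c where "c = (xminv * (Ndig m N j - z)) mod 2 ^ m"
  have c: "0 \<le> c" "c \<le> 2 ^ m - 1" unfolding c_def by simp_all
  have z: "0 \<le> z" "z < x" using Suc z_def by auto
  have "c * x \<le> (2 ^ m - 1) * x" using c assms by (intro mult_right_mono) auto
  hence lt: "z + c * x < x * 2 ^ m" using z by (simp add: algebra_simps)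
  have ge: "0 \<le> z + c * x" using z c assms by simp
  have le: "(z + c * x) div 2 ^ m * 2 ^ m \<le> z + c * x"
    using div_mult_mod_eq[of "z + c * x" "2 ^ m"] pos_mod_sign[of "2 ^ m::int" "z + c * x"] zero_less_power[of "2::int" m] by linarith
  have "(z + c * x) div 2 ^ m < x"
  proof (rule ccontr)
    assume "\<not> ?thesis"
    hence "x * 2 ^ m \<le> (z + c * x) div 2 ^ m * 2 ^ m" by (intro mult_right_mono) auto
    thus False using le lt by linarith
  qed
  moreover have "0 \<le> (z + c * x) div 2 ^ m" using ge by (simp add: pos_imp_zdiv_nonneg_iff)
  ultimately show ?case by (simp add: Let_def z_def[symmetric] c_def[symmetric])
qed

theorem proposition4p4:
  fixes m n :: nat and N x xminv :: int
  assumes "0 < m" and "0 < n" and "m dvd n"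
    and "0 < N" and "N < 2 ^ n"
    and "0 < x" and "odd x" and "x < 2 ^ m"
    and "[x * xminv = 1] (mod 2 ^ m)" and "0 \<le> xminv" and "xminv < 2 ^ m"
  shows "(\<forall>j. j < n div m \<longrightarrow> 0 \<le> zseq m N x xminv j \<and> zseq m N x xminv j < x)
       \<and> (\<forall>j. j + 2 \<le> n div m \<longrightarrow> 0 \<le> zprime m N x xminv j \<and> zprime m N x xminv j < 2 ^ (2 * m))
       \<and> (\<forall>j. j + 2 \<le> n div m \<longrightarrow> ctrl m N x xminv j = zprime m N x xminv j div x)"
proof -
  have A: "0 \<le> zprime m N x xminv j \<and> zprime m N x xminv j < 2 ^ (2 * m)
           \<and> ctrl m N x xminv j = zprime m N x xminv j div x" for j
  proof -
    define z where "z = zseq m N x xminv j"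
    define c where "c = ctrl m N x xminv j"
    have c: "0 \<le> c" "c \<le> 2 ^ m - 1" using ctrl_bounds[of m N x xminv j] unfolding c_def by auto
    have z: "0 \<le> z" "z < x" using z_bounds[OF assms(6)] z_def by auto
    have "c * x \<le> (2 ^ m - 1) * x" using c assms by (intro mult_right_mono) auto
    hence lt: "z + c * x < x * 2 ^ m" using z by (simp add: algebra_simps)
    have "x * 2 ^ m \<le> 2 ^ m * (2 ^ m :: int)" using assms by simp
    also have "\<dots> = 2 ^ (2 * m)" by (simp add: power_add mult_2 )
    finally have lt2: "z + c * x < 2 ^ (2 * m)" using lt by simp
    have ge: "0 \<le> z + c * x" using z c assms by simp
    have d: "(z + c * x) div x = c" using z assms by simp
    show ?thesis using lt2 ge d unfolding zprime_def z_def c_def by simp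
  qed
  show ?thesis using A z_bounds[OF assms(6)] by blast
qed

end
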